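(* Let $p\in(0,1)$, let $d_p\in(0,1)$ be the $(1-p)$-quantile of $K_{\hat\vartheta}=\sup_{x\in\mathbb{R}}|F_{\hat\vartheta}(x)-F_\vartheta(x)|$, and define $$C_4'=\Big\{\tilde\vartheta\in\Theta:\ \sup_{x\in\mathbb{R}}|F_{\tilde\vartheta}(x)-F_{\hat\vartheta}(x)|\le d_p\Big\},\qquad C_4''=\{(\mu,\sigma)\in C_4':\ \mu\le\hat\mu\}.$$ Let $h:(0,\infty)\to\mathbb{R}$, $h(x)=\ln\big(\frac{d_p}{|1-x|}\big)(x-1)+x\ln x$ for $x\ne1$ and $h(1)=0$, and for $x>0$ $$u(x)=\begin{cases}h(x),&x<1-d_p\\ x\ln(1-d_p),&x\ge1-d_p\end{cases},\qquad o(x)=\begin{cases}-\ln(1-d_p),&x\le\frac1{1-d_p}\\ h(x),&x>\frac1{1-d_p}\end{cases}.$$ Then $$C_4'=\Big\{(\mu,\sigma)\in\Theta:\ u\big(\tfrac{\hat\sigma}{\sigma}\big)\le\frac{\hat\mu-\mu}{\sigma}\le o\big(\tfrac{\hat\sigma}{\sigma}\big)\Big\},$$ $$C_4''=\Big\{(\mu,\sigma)\in\Theta:\ \max\big\{u\big(\tfrac{\hat\sigma}{\sigma}\big),0\big\}\le\frac{\hat\mu-\mu}{\sigma}\le o\big(\tfrac{\hat\sigma}{\sigma}\big)\Big\}.$$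
   Context: Let $1<m\le n$ be integers and $(R_1,\dots,R_m)\in\mathbb{N}_0^m$ with $\sum_{j=1}^mR_j=n-m$; set $\gamma_j=\sum_{i=j}^m(R_i+1)$. A sample of progressively type-II censored order statistics $X=(X_{1:m:n},\dots,X_{m:m:n})$ from an absolutely continuous cdf $F$ with density $f$ has joint density $\prod_{j=1}^m\gamma_jf(x_j)[1-F(x_j)]^{R_j}$ on $x_1\le\dots\le x_m$. Here $F=F_\vartheta$ belongs to the exponential location-scale family: for $\vartheta=(\mu,\sigma)\in\Theta=\mathbb{R}\times(0,\infty)$, $F_\vartheta(x)=1-\exp\{-(x-\mu)/\sigma\}$ for $x>\mu$ and $F_\vartheta(x)=0$ for $x\le\mu$; $\vartheta$ is unknown. The MLEs are $\hat\mu=X_{1:m:n}$ and $\hat\sigma=\frac1m\sum_{j=2}^m\gamma_j(X_{j:m:n}-X_{j-1:m:n})$, and $\hat\vartheta=(\hat\mu,\hat\sigma)$. The distribution of $K_{\hat\vartheta}$ does not depend on $\vartheta$. *)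

theory Defs
  imports Complex_Main
begin

definition Fexp :: "real \<times> real \<Rightarrow> real \<Rightarrow> real" where
  "Fexp \<theta> x = (if x > fst \<theta> then 1 - exp (- (x - fst \<theta>) / snd \<theta>) else 0)"

definition Theta :: "(real \<times> real) set" where
  "Theta = {(\<mu>, \<sigma>). \<sigma> > 0}"

definition KS_dist :: "real \<times> real \<Rightarrow> real \<times> real \<Rightarrow> real" where
  "KS_dist a b = (SUP x::real. \<bar>Fexp a x - Fexp b x\<bar>)"

definition C4' :: "real \<Rightarrow> real \<times> real \<Rightarrow> (real \<times> real) set" where
  "C4' d \<theta>hat = {\<theta> \<in> Theta. KS_dist \<theta> \<theta>hat \<le> d}"

definition C4'' :: "real \<Rightarrow> real \<times> real \<Rightarrow> (real \<times> real) set" where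
  "C4'' d \<theta>hat = {(\<mu>, \<sigma>) \<in> C4' d \<theta>hat. \<mu> \<le> fst \<theta>hat}"

definition hfun :: "real \<Rightarrow> real \<Rightarrow> real" where
  "hfun d x = (if x = 1 then 0 else ln (d / \<bar>1 - x\<bar>) * (x - 1) + x * ln x)"

definition ufun :: "real \<Rightarrow> real \<Rightarrow> real" where
  "ufun d x = (if x < 1 - d then hfun d x else x * ln (1 - d))"

definition ofun :: "real \<Rightarrow> real \<Rightarrow> real" where
  "ofun d x = (if x \<le> 1 / (1 - d) then - ln (1 - d) else hfun d x)"

end

theory Submission imports Defs "HOL-Analysis.Analysis" begin

lemma expcvx:
  fixes l u :: real
  assumes "0 \<le> l" "l \<le> 1"
  shows "exp (l * u) \<le> 1 + l * (exp u - 1)"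
proof -
  have "exp ((1 - l) *\<^sub>R 0 + l *\<^sub>R u) \<le> (1 - l) * exp 0 + l * exp u"
    using convex_onD[OF exp_convex, of l 0 u] assms by simp
  then show ?thesis by (simp add: algebra_simps)
qed

definition E :: "real \<Rightarrow> real \<Rightarrow> real \<Rightarrow> real" where "E a s y = exp (-(y-a)/s)"

lemma T1:
  fixes a s y y0 :: real
  assumes "s \<ge> 1"
  shows "s * exp(-y0) * (E a s y - E a s y0) \<le> E a s y0 * (exp(-y) - exp(-y0))"
proof -
  define w where "w = y - y0"
  have c: "exp ((1/s) * (-w)) \<le> 1 + (1/s) * (exp (-w) - 1)"
    using expcvx[of "1/s" "-w"] assms by auto
  have e1: "E a s y = E a s y0 * exp ((1/s) * (-w))"
    unfolding E_def w_def by (simp add: exp_add[symmetric] add_divide_distrib[symmetric])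
  have e2: "exp (-y) = exp (-y0) * exp (-w)"
    unfolding w_def by (simp add: exp_add[symmetric])
  have pos: "E a s y0 > 0" "exp (-y0) > 0" by (auto simp: E_def)
  have "s * (exp ((1/s) * (-w)) - 1) \<le> exp (-w) - 1"
    using c assms by (simp add: field_simps)
  then have "s * exp(-y0) * E a s y0 * (exp ((1/s) * (-w)) - 1) \<le> exp(-y0) * E a s y0 * (exp (-w) - 1)"
    using pos by (smt (verit) mult.commute mult.left_commute mult_le_cancel_left_pos mult_pos_pos)
  then show ?thesis unfolding e1 e2 by (simp add: algebra_simps)
qed

lemma T2:
  fixes a s y y0 :: real
  assumes "s \<le> 1" "s > 0"
  shows "E a s y0 * (exp(-y) - exp(-y0)) \<le> s * exp(-y0) * (E a s y - E a s y0)"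
proof -
  define w where "w = y - y0"
  have c: "exp (s * (-w/s)) \<le> 1 + s * (exp (-w/s) - 1)"
    using expcvx[of s "-w/s"] assms by auto
  have c': "exp (-w) \<le> 1 + s * (exp (-w/s) - 1)" using c assms by simp
  have e1: "E a s y = E a s y0 * exp (-w/s)"
    unfolding E_def w_def by (simp add: exp_add[symmetric] add_divide_distrib[symmetric])
  have e2: "exp (-y) = exp (-y0) * exp (-w)"
    unfolding w_def by (simp add: exp_add[symmetric])
  have pos: "E a s y0 > 0" "exp (-y0) > 0" by (auto simp: E_def)
  have "exp(-y0) * E a s y0 * (exp (-w) - 1) \<le> exp(-y0) * E a s y0 * (s * (exp (-w/s) - 1))"
    using c' pos by (intro mult_left_mono) auto
  then show ?thesis unfolding e1 e2 by (simp add: algebra_simps)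
qed

definition G :: "real \<Rightarrow> real" where "G y = (if y > 0 then 1 - exp (-y) else 0)"

context
  fixes a s d :: real
  assumes s0: "s > 0" and d0: "0 < d" and d1: "d < 1"
begin

definition "phi y = E a s y - exp (-y)"
definition "m = max 0 a"
definition "ys = (a - s * ln s) / (1 - s)"

lemma K1: assumes "s \<noteq> 1" shows "E a s ys = s * exp (-ys)"
proof -
  have "ys * (1 - s) = a - s * ln s" using assms by (simp add: ys_def)
  then have "-(ys - a)/s = ln s + (-ys)" using s0 by (simp add: field_simps)
  moreover have "s * exp (-ys) = exp (ln s - ys)" using s0 by (simp add: exp_diff exp_minus divide_inverse)
  ultimately show ?thesis using s0 by (simp add: E_def)
qed

lemma phi_ys: assumes "s \<noteq> 1" shows "phi ys = (s - 1) * exp (-ys)"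
  using K1[OF assms] by (simp add: phi_def algebra_simps)

lemma gmax: assumes "s > 1" shows "phi y \<le> phi ys"
proof -
  have t: "s * exp(-ys) * (E a s y - E a s ys) \<le> E a s ys * (exp(-y) - exp(-ys))"
    using T1[where a=a and s=s and y=y and y0=ys] assms by simp
  have "s * exp(-ys) * (E a s y - E a s ys) \<le> s * exp(-ys) * (exp(-y) - exp(-ys))"
    using t K1[of] assms by simp
  then have "E a s y - E a s ys \<le> exp(-y) - exp(-ys)" using s0 by simp
  then show ?thesis by (simp add: phi_def)
qed

lemma gmin: assumes "s < 1" shows "phi ys \<le> phi y"
proof -
  have t: "E a s ys * (exp(-y) - exp(-ys)) \<le> s * exp(-ys) * (E a s y - E a s ys)"
    using T2[where a=a and s=s and y=y and y0=ys] assms s0 by simp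
  have "s * exp(-ys) * (exp(-y) - exp(-ys)) \<le> s * exp(-ys) * (E a s y - E a s ys)"
    using t K1 assms by simp
  then have "exp(-y) - exp(-ys) \<le> E a s y - E a s ys" using s0 by simp
  then show ?thesis by (simp add: phi_def)
qed

lemma K4: assumes "s > 1" "ys \<le> m" shows "s * exp (-m) \<le> E a s m"
proof -
  have "ys * (1 - s) \<ge> m * (1 - s)" using assms by (intro mult_right_mono_neg) auto
  then have "m * (1 - s) \<le> a - s * ln s" using assms by (simp add: ys_def)
  then have "ln s + (-m) \<le> -(m - a)/s" using s0 by (simp add: field_simps)
  then have "exp (ln s - m) \<le> exp (-(m - a)/s)" by simp
  moreover have "s * exp (-m) = exp (ln s - m)" using s0 by (simp add: exp_diff exp_minus divide_inverse)
  ultimately show ?thesis using s0 by (simp add: E_def)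
qed

lemma K5: assumes "s < 1" "ys \<le> m" shows "E a s m \<le> s * exp (-m)"
proof -
  have "ys * (1 - s) \<le> m * (1 - s)" using assms by (intro mult_right_mono) auto
  then have "a - s * ln s \<le> m * (1 - s)" using assms by (simp add: ys_def)
  then have "-(m - a)/s \<le> ln s + (-m)" using s0 by (simp add: field_simps)
  then have "exp (-(m - a)/s) \<le> exp (ln s - m)" by simp
  moreover have "s * exp (-m) = exp (ln s - m)" using s0 by (simp add: exp_diff exp_minus divide_inverse)
  ultimately show ?thesis using s0 by (simp add: E_def)
qed

lemma Emono: assumes "y0 \<le> y" shows "E a s y \<le> E a s y0"
  unfolding E_def using assms s0 by (simp add: divide_right_mono)

lemma mono_up: assumes "s > 1" "ys \<le> m" "m \<le> y" shows "phi y \<le> phi m"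
proof -
  have t: "s * exp(-m) * (E a s y - E a s m) \<le> E a s m * (exp(-y) - exp(-m))"
    using T1[where a=a and s=s and y=y and y0=m] assms by simp
  have hle: "exp(-y) - exp(-m) \<le> 0" using assms by simp
  have "E a s m * (exp(-y) - exp(-m)) \<le> s * exp(-m) * (exp(-y) - exp(-m))"
    using K4[OF assms(1,2)] hle by (intro mult_right_mono_neg) auto
  with t have "s * exp(-m) * (E a s y - E a s m) \<le> s * exp(-m) * (exp(-y) - exp(-m))" by linarith
  then have "E a s y - E a s m \<le> exp(-y) - exp(-m)" using s0 by simp
  then show ?thesis by (simp add: phi_def)
qed

lemma mono_lo: assumes "s < 1" "ys \<le> m" "m \<le> y" shows "phi m \<le> phi y"
proof -
  have t: "E a s m * (exp(-y) - exp(-m)) \<le> s * exp(-m) * (E a s y - E a s m)"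
    using T2[where a=a and s=s and y=y and y0=m] assms s0 by simp
  have ele: "E a s y - E a s m \<le> 0" using Emono assms by simp
  have "s * exp(-m) * (E a s y - E a s m) \<le> E a s m * (E a s y - E a s m)"
    using K5[OF assms(1,2)] ele by (intro mult_right_mono_neg) auto
  with t have "E a s m * (exp(-y) - exp(-m)) \<le> E a s m * (E a s y - E a s m)" by linarith
  then have "exp(-y) - exp(-m) \<le> E a s y - E a s m" by (simp add: E_def)
  then show ?thesis by (simp add: phi_def)
qed


lemma G1: assumes "s \<le> 1" "m \<le> y" "0 \<le> a \<Longrightarrow> 1 - exp (-a) \<le> d" shows "phi y \<le> d"
proof -
  have ya: "a \<le> y" "0 \<le> y" using assms(2) by (auto simp: m_def)
  have "(y - a) * s \<le> (y - a) * 1" using assms(1) ya by (intro mult_left_mono) auto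
  then have q: "y - a \<le> (y-a)/s" using s0 by (simp add: pos_le_divide_eq)
  have "-(y-a)/s = -((y-a)/s)" by (simp only: minus_divide_left)
  with q have "-(y-a)/s \<le> -(y - a)" by linarith
  then have "E a s y \<le> exp (a - y)" unfolding E_def by simp
  also have "exp (a - y) = exp a * exp (-y)" by (simp add: exp_diff exp_minus divide_inverse)
  finally have le: "phi y \<le> (exp a - 1) * exp (-y)" by (simp add: phi_def algebra_simps)
  show ?thesis
  proof (cases "a \<le> 0")
    case True
    then have "(exp a - 1) * exp (-y) \<le> 0" by (simp add: mult_nonpos_nonneg)
    with le d0 show ?thesis by linarith
  next
    case False
    have "(exp a - 1) * exp (-y) \<le> (exp a - 1) * exp (-a)"
      using False ya by (intro mult_left_mono) auto
    also have "\<dots> = 1 - exp (-a)" by (simp add: algebra_simps exp_minus)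
    finally show ?thesis using le assms(3) False by linarith
  qed
qed

lemma G4: assumes "s \<ge> 1" "m \<le> y" "a < 0 \<Longrightarrow> 1 - exp (a/s) \<le> d" shows "- d \<le> phi y"
proof (cases "a < 0")
  case False
  have ya: "a \<le> y" using assms(2) by (auto simp: m_def)
  have "(y - a) * 1 \<le> (y - a) * s" using assms(1) ya by (intro mult_left_mono) auto
  then have q: "(y-a)/s \<le> y - a" using s0 by (simp add: pos_divide_le_eq)
  have "-(y-a)/s = -((y-a)/s)" by (simp only: minus_divide_left)
  with q have "-(y - a) \<le> -(y-a)/s" by linarith
  then have "exp (-y) \<le> E a s y" unfolding E_def using False by (smt (verit) exp_le_cancel_iff)
  then show ?thesis using d0 by (simp add: phi_def)
next
  case True
  have y0: "0 \<le> y" using assms(2) by (auto simp: m_def)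
  have E: "E a s y = exp (a/s) * exp (-y/s)" unfolding E_def
    by (simp add: exp_add[symmetric] diff_divide_distrib)
  have "-y \<le> -y/s"
  proof -
    have "y * 1 \<le> y * s" using y0 assms(1) by (intro mult_left_mono) auto
    then have "y/s \<le> y" using s0 by (simp add: pos_divide_le_eq)
    moreover have "-y/s = -(y/s)" by (simp only: minus_divide_left)
    ultimately show ?thesis by linarith
  qed
  then have h1: "exp (-y) \<le> exp (-y/s)" by simp
  have h2: "exp (-y/s) \<le> 1" using y0 s0 by simp
  have h3: "exp (a/s) \<le> 1" using True s0 by (simp add: divide_nonpos_pos)
  have "exp (a/s) * (1 - exp (-y/s)) \<le> 1 * (1 - exp (-y/s))"
    using h2 h3 by (intro mult_right_mono) auto
  then have "exp (a/s) - exp (a/s) * exp (-y/s) \<le> 1 - exp (-y/s)" by (simp add: right_diff_distrib)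
  with h1 have "exp (a/s) - 1 \<le> exp (a/s) * exp (-y/s) - exp (-y)" by linarith
  then have "exp (a/s) - 1 \<le> phi y" unfolding phi_def E .
  then show ?thesis using assms(3)[OF True] by linarith
qed

lemma phi_m_pos: "0 \<le> a \<Longrightarrow> phi m = 1 - exp (-a)"
  by (simp add: phi_def m_def E_def)
lemma phi_m_neg: "a < 0 \<Longrightarrow> phi m = exp (a/s) - 1"
  by (simp add: phi_def m_def E_def)

lemma K2: assumes "s > 1" shows "phi ys \<le> d \<longleftrightarrow> a \<le> hfun d s"
proof -
  have "phi ys = exp (ln (s-1) - ys)" using assms phi_ys by (simp add: exp_diff exp_minus divide_inverse)
  then have "phi ys \<le> d \<longleftrightarrow> ln (s-1) - ys \<le> ln d" using d0
    by (metis exp_le_cancel_iff exp_ln)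
  also have "\<dots> \<longleftrightarrow> (a - s * ln s) / (s - 1) \<le> ln d - ln (s-1)"
    unfolding ys_def using assms by (simp add: field_simps)
  also have "\<dots> \<longleftrightarrow> a - s * ln s \<le> (ln d - ln (s-1)) * (s - 1)"
    using assms by (simp add: pos_divide_le_eq)
  also have "\<dots> \<longleftrightarrow> a \<le> hfun d s"
    unfolding hfun_def using assms d0 by (simp add: ln_div algebra_simps)
  finally show ?thesis .
qed

lemma K3: assumes "s < 1" shows "-d \<le> phi ys \<longleftrightarrow> hfun d s \<le> a"
proof -
  have "- phi ys = exp (ln (1-s) - ys)" using assms phi_ys by (simp add: exp_diff exp_minus divide_inverse algebra_simps)
  then have "-d \<le> phi ys \<longleftrightarrow> ln (1-s) - ys \<le> ln d" using d0
    by (smt (verit) exp_le_cancel_iff exp_ln)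
  also have "\<dots> \<longleftrightarrow> ln (1-s) - ln d \<le> (a - s * ln s) / (1 - s)"
    unfolding ys_def by linarith
  also have "\<dots> \<longleftrightarrow> (ln (1-s) - ln d) * (1 - s) \<le> a - s * ln s"
    using assms by (simp add: pos_le_divide_eq)
  also have "\<dots> \<longleftrightarrow> hfun d s \<le> a"
    unfolding hfun_def using assms d0 by (simp add: ln_div algebra_simps)
  finally show ?thesis .
qed


lemma val_ge: assumes "m \<le> y" shows "G y - G ((y - a)/s) = phi y"
proof -
  have ya: "a \<le> y" "0 \<le> y" using assms by (auto simp: m_def)
  show ?thesis
  proof (cases "y = 0")
    case True
    then have "a \<le> 0" using ya by simp
    then show ?thesis unfolding phi_def E_def using True s0 by (cases "a = 0") (auto simp: G_def divide_neg_pos)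
  next
    case False
    then have yp: "y > 0" using ya by simp
    show ?thesis
    proof (cases "y = a")
      case True then show ?thesis using yp by (simp add: G_def phi_def E_def)
    next
      case False
      then have "(y - a)/s > 0" using ya s0 by simp
      then show ?thesis using yp by (simp add: G_def phi_def E_def diff_divide_distrib)
    qed
  qed
qed

lemma val_lt: assumes "y < m" shows "\<bar>G y - G ((y - a)/s)\<bar> \<le> \<bar>phi m\<bar>"
proof (cases "0 \<le> a")
  case True
  then have ym: "y < a" using assms by (simp add: m_def)
  have g2: "G ((y - a)/s) = 0" using divide_neg_pos[of "y-a" s] ym s0 by (simp add: G_def)
  show ?thesis
  proof (cases "y > 0")
    case True
    then have "\<bar>G y - G ((y - a)/s)\<bar> = 1 - exp (-y)" using g2 by (simp add: G_def)
    also have "\<dots> \<le> 1 - exp (-a)" using ym by simp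
    finally show ?thesis using phi_m_pos[OF \<open>0 \<le> a\<close>] by simp
  next
    case False then show ?thesis using g2 by (simp add: G_def)
  qed
next
  case False
  then have y0: "y < 0" and an: "a < 0" using assms by (auto simp: m_def)
  have g1: "G y = 0" using y0 by (simp add: G_def)
  show ?thesis
  proof (cases "a < y")
    case True
    then have "(y - a)/s > 0" using s0 by simp
    then have "\<bar>G y - G ((y - a)/s)\<bar> = 1 - E a s y" using g1 by (simp add: G_def E_def diff_divide_distrib)
    also have "\<dots> \<le> 1 - E a s 0" using Emono[of y 0] y0 by simp
    also have "\<dots> = \<bar>phi m\<bar>" using phi_m_neg[OF an] an s0
      using divide_neg_pos[of a s] by (simp add: E_def)
    finally show ?thesis .
  next
    case False
    then have "G ((y - a)/s) = 0" using s0 divide_nonpos_pos[of "y-a" s] by (simp add: G_def)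
    then show ?thesis using g1 by simp
  qed
qed

lemma step1: "(\<forall>y. \<bar>G y - G ((y - a)/s)\<bar> \<le> d) \<longleftrightarrow> (\<forall>y\<ge>m. -d \<le> phi y \<and> phi y \<le> d)"
proof
  assume H: "\<forall>y. \<bar>G y - G ((y - a)/s)\<bar> \<le> d"
  show "\<forall>y\<ge>m. -d \<le> phi y \<and> phi y \<le> d"
  proof (intro allI impI)
    fix y assume "m \<le> y"
    with H val_ge show "-d \<le> phi y \<and> phi y \<le> d" by (metis abs_le_iff minus_le_iff)
  qed
next
  assume H: "\<forall>y\<ge>m. -d \<le> phi y \<and> phi y \<le> d"
  then have hm: "\<bar>phi m\<bar> \<le> d" by auto
  show "\<forall>y. \<bar>G y - G ((y - a)/s)\<bar> \<le> d"
  proof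
    fix y
    show "\<bar>G y - G ((y - a)/s)\<bar> \<le> d"
    proof (cases "m \<le> y")
      case True then show ?thesis using H val_ge by auto
    next
      case False then show ?thesis using val_lt[of y] hm by simp
    qed
  qed
qed


lemma c1: "1 - exp (-a) \<le> d \<longleftrightarrow> a \<le> - ln (1 - d)"
proof -
  have e: "exp (ln (1-d)) = 1 - d" using d1 by simp
  have "1 - exp (-a) \<le> d \<longleftrightarrow> exp (ln (1-d)) \<le> exp (-a)" using e by (intro iffI) linarith+
  also have "\<dots> \<longleftrightarrow> a \<le> - ln (1 - d)" by (simp only: exp_le_cancel_iff) linarith
  finally show ?thesis .
qed

lemma c2: "1 - exp (a/s) \<le> d \<longleftrightarrow> s * ln (1 - d) \<le> a"
proof -
  have e: "exp (ln (1-d)) = 1 - d" using d1 by simp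
  have "1 - exp (a/s) \<le> d \<longleftrightarrow> exp (ln (1-d)) \<le> exp (a/s)" using e by (intro iffI) linarith+
  also have "\<dots> \<longleftrightarrow> ln (1-d) \<le> a/s" by (simp only: exp_le_cancel_iff)
  also have "\<dots> \<longleftrightarrow> s * ln (1 - d) \<le> a" using s0 by (simp add: pos_le_divide_eq mult.commute)
  finally show ?thesis .
qed

lemma ysa: "s \<noteq> 1 \<Longrightarrow> ys - a = s * (a - ln s) / (1 - s)"
  unfolding ys_def by (simp add: field_simps)
lemma ysl: "s \<noteq> 1 \<Longrightarrow> ys - ln s = (a - ln s) / (1 - s)"
  unfolding ys_def by (simp add: field_simps)

lemma Lpos: "ln (1 - d) < 0" using d0 d1 by simp

lemma core: "(\<forall>y\<ge>m. -d \<le> phi y \<and> phi y \<le> d) \<longleftrightarrow> ufun d s \<le> a \<and> a \<le> ofun d s"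
proof -
  let ?U = "\<forall>y\<ge>m. phi y \<le> d"
  let ?Lo = "\<forall>y\<ge>m. -d \<le> phi y"
  have split: "(\<forall>y\<ge>m. -d \<le> phi y \<and> phi y \<le> d) \<longleftrightarrow> ?U \<and> ?Lo" by auto
  have m0: "0 \<le> m" "a \<le> m" by (auto simp: m_def)
  have ma: "0 \<le> a \<Longrightarrow> m = a" "a < 0 \<Longrightarrow> m = 0" by (auto simp: m_def)
  have F1: "?U \<Longrightarrow> 0 \<le> a \<Longrightarrow> a \<le> - ln (1 - d)"
    using phi_m_pos c1 by auto
  have F3: "?Lo \<Longrightarrow> a < 0 \<Longrightarrow> s * ln (1 - d) \<le> a"
    using phi_m_neg c2 by fastforce
  have d1': "1 \<le> 1 / (1 - d)" using d0 d1 by simp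
  show ?thesis
  proof (cases "s < 1")
    case sl: True
    have o: "ofun d s = - ln (1 - d)" unfolding ofun_def using sl d1' by simp
    have gm: "?Lo" if "-d \<le> phi ys" using gmin[OF sl] that by (meson order_trans)
    show ?thesis
    proof (cases "s < 1 - d")
      case True
      have u: "ufun d s = hfun d s" unfolding ufun_def using True by simp
      show ?thesis unfolding split o u
      proof
        assume "?U \<and> ?Lo" then have U: ?U and Lo: ?Lo by auto
        have "a \<le> - ln (1 - d)" using F1[OF U] Lpos by linarith
        moreover have "hfun d s \<le> a"
        proof (cases "m \<le> ys")
          case True then show ?thesis using K3[OF sl] Lo by auto
        next
          case False
          show ?thesis
          proof (cases "0 \<le> a")
            case True
            have "ln s < 0" using sl s0 by simp
            then have "0 \<le> a - ln s" using True by linarith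
            then have "0 \<le> s * (a - ln s) / (1 - s)" using sl s0
              by (intro divide_nonneg_pos mult_nonneg_nonneg) auto
            moreover have "ys - a = s * (a - ln s) / (1 - s)" using ysa sl by simp
            ultimately have "a \<le> ys" by simp
            then show ?thesis using ma(1)[OF True] False by simp
          next
            case an: False
            have "ys < 0" using False ma an by simp
            then have "a - s * ln s < 0" unfolding ys_def using sl by (simp add: divide_less_0_iff)
            moreover have "s * ln s < s * ln (1 - d)" using True s0 by simp
            ultimately show ?thesis using F3[OF Lo] an by linarith
          qed
        qed
        ultimately show "hfun d s \<le> a \<and> a \<le> - ln (1 - d)" by simp
      next
        assume "hfun d s \<le> a \<and> a \<le> - ln (1 - d)"
        then show "?U \<and> ?Lo" using G1[of] sl c1 gm K3[OF sl] by auto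
      qed
    next
      case False
      have u: "ufun d s = s * ln (1 - d)" unfolding ufun_def using False by simp
      show ?thesis unfolding split o u
      proof
        assume "?U \<and> ?Lo" then have U: ?U and Lo: ?Lo by auto
        have "a \<le> - ln (1 - d)" using F1[OF U] Lpos by linarith
        moreover have "s * ln (1 - d) \<le> a" using F3[OF Lo] mult_pos_neg[OF s0 Lpos] by (cases "a < 0") auto
        ultimately show "s * ln (1 - d) \<le> a \<and> a \<le> - ln (1 - d)" by simp
      next
        assume "s * ln (1 - d) \<le> a \<and> a \<le> - ln (1 - d)"
        then have A: "s * ln (1 - d) \<le> a" "a \<le> - ln (1 - d)" by auto
        then have "?U" using G1[of] sl c1 by auto
        moreover have ?Lo
        proof (cases "m \<le> ys")
          case True
          have "exp (-ys) \<le> 1" using True m0 by simp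
          then have "(1 - s) * exp (-ys) \<le> (1 - s) * 1" using sl by (intro mult_left_mono) auto
          then have "-d \<le> phi ys" using phi_ys sl False by (simp add: algebra_simps)
          then show ?thesis by (rule gm)
        next
          case nf: False
          have pm: "-d \<le> phi m"
          proof (cases "0 \<le> a")
            case True
            then have "exp (-a) \<le> 1" by simp
            then show ?thesis using phi_m_pos[OF True] d0 by linarith
          next
            case False then show ?thesis using phi_m_neg c2 A by simp
          qed
          show ?thesis using mono_lo[OF sl] nf pm by (meson linorder_not_le order_trans less_imp_le)
        qed
        ultimately show "?U \<and> ?Lo" by simp
      qed
    qed
  next
    case False
    then have s1: "s \<ge> 1" by simp
    have u: "ufun d s = s * ln (1 - d)" unfolding ufun_def using s1 d0 by simp
    have LoI: "?Lo \<longleftrightarrow> s * ln (1 - d) \<le> a"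
    proof
      assume Lo: ?Lo show "s * ln (1 - d) \<le> a" using F3[OF Lo] mult_pos_neg[OF s0 Lpos] by (cases "a < 0") auto
    next
      assume "s * ln (1 - d) \<le> a" then show ?Lo using G4[OF s1] c2 by auto
    qed
    show ?thesis
    proof (cases "s = 1")
      case True
      have o: "ofun d s = - ln (1 - d)" unfolding ofun_def using True d1' by simp
      have "?U \<longleftrightarrow> a \<le> - ln (1 - d)"
      proof
        assume U: ?U show "a \<le> - ln (1 - d)" using F1[OF U] Lpos by linarith
      next
        assume "a \<le> - ln (1 - d)" then show ?U using G1 True c1 by auto
      qed
      then show ?thesis unfolding split o u LoI by auto
    next
      case False
      then have sg: "s > 1" using s1 by simp
      show ?thesis
      proof (cases "s \<le> 1 / (1 - d)")
        case sle: True
        have o: "ofun d s = - ln (1 - d)" unfolding ofun_def using sle by simp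
        have "?U \<longleftrightarrow> a \<le> - ln (1 - d)"
        proof
          assume U: ?U show "a \<le> - ln (1 - d)" using F1[OF U] Lpos by linarith
        next
          assume A: "a \<le> - ln (1 - d)"
          show ?U
          proof (cases "m \<le> ys")
            case True
            have "a \<le> ln s"
            proof (cases "0 \<le> a")
              case True
              have "0 \<le> s * (a - ln s) / (1 - s)" using ysa sg ma(1)[OF True] \<open>m \<le> ys\<close> by simp
              then have "s * (a - ln s) \<le> 0" using sg by (simp add: zero_le_divide_iff)
              then show ?thesis using s0 by (simp add: mult_le_0_iff)
            next
              case False
              have "0 < ln s" using sg by simp
              then show ?thesis using False by linarith
            qed
            have "(a - ln s) / (1 - s) \<ge> 0" using \<open>a \<le> ln s\<close> sg
              by (simp add: divide_nonpos_neg)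
            then have "ln s \<le> ys" using ysl sg by simp
            then have "exp (-ys) \<le> exp (- ln s)" by simp
            also have "\<dots> = 1 / s" using s0 by (simp add: exp_minus inverse_eq_divide)
            finally have "(s - 1) * exp (-ys) \<le> (s - 1) * (1 / s)" using sg by (intro mult_left_mono) auto
            also have "\<dots> \<le> d"
            proof -
              have "s * (1 - d) \<le> 1" using sle d1 by (simp add: le_divide_eq mult.commute)
              then show ?thesis using s0 by (simp add: divide_le_eq algebra_simps)
            qed
            finally have "phi ys \<le> d" using phi_ys sg by simp
            then show ?thesis using gmax[OF sg] by (meson order_trans)
          next
            case nf: False
            have pm: "phi m \<le> d"
            proof (cases "0 \<le> a")
              case True then show ?thesis using phi_m_pos c1 A by simp
            next
              case False
              then have "exp (a/s) \<le> 1" using s0 divide_neg_pos[of a s] by simp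
              then show ?thesis using phi_m_neg False d0 by linarith
            qed
            show ?thesis using mono_up[OF sg] nf pm by (meson linorder_not_le order_trans less_imp_le)
          qed
        qed
        then show ?thesis unfolding split o u LoI by auto
      next
        case False
        have o: "ofun d s = hfun d s" unfolding ofun_def using False by simp
        have "?U \<longleftrightarrow> a \<le> hfun d s"
        proof
          assume U: ?U
          show "a \<le> hfun d s"
          proof (cases "m \<le> ys")
            case True then show ?thesis using K2[OF sg] U by auto
          next
            case nf: False
            show ?thesis
            proof (cases "0 \<le> a")
              case an: True
              have "s * (a - ln s) / (1 - s) < 0" using ysa sg ma(1)[OF an] nf by simp
              then have "0 < s * (a - ln s)" using sg by (simp add: divide_less_0_iff)
              then have "ln s < a" using s0 by (simp add: zero_less_mult_iff)
              moreover have "- ln (1 - d) < ln s"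
              proof -
                have "1 / (1 - d) < s" using False by simp
                then have "ln (1 / (1 - d)) < ln s" using d1 s0 by (subst ln_less_cancel_iff) auto
                then show ?thesis using d1 by (simp add: ln_div)
              qed
              ultimately show ?thesis using F1[OF U an] by linarith
            next
              case an: False
              have "0 < s * ln s" using sg by simp
              then have "a - s * ln s < 0" using an by linarith
              then have "0 < (a - s * ln s) / (1 - s)" using sg by (intro divide_neg_neg) auto
              then show ?thesis using nf ma(2) an by (simp add: ys_def)
            qed
          qed
        next
          assume "a \<le> hfun d s"
          then have "phi ys \<le> d" using K2[OF sg] by simp
          then show ?U using gmax[OF sg] by (meson order_trans)
        qed
        then show ?thesis unfolding split o u LoI by auto
      qed
    qed
  qed
qed

end

lemma main_eq:
  assumes "s > 0" "0 < d" "d < 1"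
  shows "(\<forall>y. \<bar>G y - G ((y - a)/s)\<bar> \<le> d) \<longleftrightarrow> ufun d s \<le> a \<and> a \<le> ofun d s"
  using step1[OF assms, of a] core[OF assms, of a] by simp

lemma G_bounds: "0 \<le> G y" "G y \<le> 1"
  by (auto simp: G_def)

lemma Fexp_G: "Fexp (\<mu>, \<sigma>) x = G ((x - \<mu>) / \<sigma>)" if "\<sigma> > 0"
proof -
  have "x > \<mu> \<longleftrightarrow> (x - \<mu>)/\<sigma> > 0" using that by (simp add: zero_less_divide_iff)
  moreover have "-(x - \<mu>)/\<sigma> = -((x-\<mu>)/\<sigma>)" by (simp only: minus_divide_left)
  ultimately show ?thesis by (simp add: Fexp_def G_def)
qed

lemma KS_iff:
  assumes "\<sigma> > 0" "\<sigma>hat > 0" "0 < d" "d < 1"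
  shows "KS_dist (\<mu>, \<sigma>) (\<mu>hat, \<sigma>hat) \<le> d \<longleftrightarrow>
     ufun d (\<sigma>hat / \<sigma>) \<le> (\<mu>hat - \<mu>) / \<sigma> \<and> (\<mu>hat - \<mu>) / \<sigma> \<le> ofun d (\<sigma>hat / \<sigma>)"
proof -
  define a where "a = (\<mu>hat - \<mu>) / \<sigma>"
  define s where "s = \<sigma>hat / \<sigma>"
  have s0: "s > 0" using assms by (simp add: s_def)
  have bdd: "bdd_above (range (\<lambda>x. \<bar>Fexp (\<mu>, \<sigma>) x - Fexp (\<mu>hat, \<sigma>hat) x\<bar>))"
  proof (rule bdd_aboveI2)
    fix x show "\<bar>Fexp (\<mu>, \<sigma>) x - Fexp (\<mu>hat, \<sigma>hat) x\<bar> \<le> 1"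
      using G_bounds[of "(x - \<mu>) / \<sigma>"] G_bounds[of "(x - \<mu>hat) / \<sigma>hat"] assms
      by (simp add: Fexp_G)
  qed
  have tr: "(x - \<mu>hat) / \<sigma>hat = ((x - \<mu>)/\<sigma> - a) / s" for x
    using assms unfolding a_def s_def by (simp add: field_simps)
  have "KS_dist (\<mu>, \<sigma>) (\<mu>hat, \<sigma>hat) \<le> d \<longleftrightarrow> (\<forall>x. \<bar>Fexp (\<mu>, \<sigma>) x - Fexp (\<mu>hat, \<sigma>hat) x\<bar> \<le> d)"
    unfolding KS_dist_def using cSUP_le_iff[OF _ bdd] by simp
  also have "\<dots> \<longleftrightarrow> (\<forall>x. \<bar>G ((x - \<mu>)/\<sigma>) - G (((x - \<mu>)/\<sigma> - a) / s)\<bar> \<le> d)"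
    using assms by (simp add: Fexp_G tr)
  also have "\<dots> \<longleftrightarrow> (\<forall>y. \<bar>G y - G ((y - a) / s)\<bar> \<le> d)"
  proof
    assume H: "\<forall>x. \<bar>G ((x - \<mu>)/\<sigma>) - G (((x - \<mu>)/\<sigma> - a) / s)\<bar> \<le> d"
    show "\<forall>y. \<bar>G y - G ((y - a) / s)\<bar> \<le> d"
    proof
      fix y
      have "(\<mu> + \<sigma> * y - \<mu>)/\<sigma> = y" using assms by simp
      then show "\<bar>G y - G ((y - a) / s)\<bar> \<le> d" using H[rule_format, of "\<mu> + \<sigma> * y"] by simp
    qed
  qed auto
  also have "\<dots> \<longleftrightarrow> ufun d s \<le> a \<and> a \<le> ofun d s" using main_eq[OF s0 assms(3,4)] .
  finally show ?thesis unfolding a_def s_def .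
qed

theorem theorem4:
  fixes d \<mu>hat \<sigma>hat :: real
  assumes "0 < d" and "d < 1" and "\<sigma>hat > 0"
  shows "C4' d (\<mu>hat, \<sigma>hat) =
           {(\<mu>, \<sigma>) \<in> Theta. ufun d (\<sigma>hat / \<sigma>) \<le> (\<mu>hat - \<mu>) / \<sigma> \<and>
                            (\<mu>hat - \<mu>) / \<sigma> \<le> ofun d (\<sigma>hat / \<sigma>)}
       \<and> C4'' d (\<mu>hat, \<sigma>hat) =
           {(\<mu>, \<sigma>) \<in> Theta. max (ufun d (\<sigma>hat / \<sigma>)) 0 \<le> (\<mu>hat - \<mu>) / \<sigma> \<and>
                            (\<mu>hat - \<mu>) / \<sigma> \<le> ofun d (\<sigma>hat / \<sigma>)}"
proof -
  have A: "C4' d (\<mu>hat, \<sigma>hat) =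
           {(\<mu>, \<sigma>) \<in> Theta. ufun d (\<sigma>hat / \<sigma>) \<le> (\<mu>hat - \<mu>) / \<sigma> \<and>
                            (\<mu>hat - \<mu>) / \<sigma> \<le> ofun d (\<sigma>hat / \<sigma>)}"
  proof (rule set_eqI)
    fix p :: "real \<times> real"
    obtain \<mu> \<sigma> where p: "p = (\<mu>, \<sigma>)" by fastforce
    show "p \<in> C4' d (\<mu>hat, \<sigma>hat) \<longleftrightarrow> p \<in> {(\<mu>, \<sigma>) \<in> Theta. ufun d (\<sigma>hat / \<sigma>) \<le> (\<mu>hat - \<mu>) / \<sigma> \<and>
                            (\<mu>hat - \<mu>) / \<sigma> \<le> ofun d (\<sigma>hat / \<sigma>)}"
      unfolding p C4'_def Theta_def using KS_iff[of \<sigma> \<sigma>hat d \<mu> \<mu>hat] assms by auto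
  qed
  have B: "C4'' d (\<mu>hat, \<sigma>hat) =
           {(\<mu>, \<sigma>) \<in> Theta. max (ufun d (\<sigma>hat / \<sigma>)) 0 \<le> (\<mu>hat - \<mu>) / \<sigma> \<and>
                            (\<mu>hat - \<mu>) / \<sigma> \<le> ofun d (\<sigma>hat / \<sigma>)}"
  proof (rule set_eqI)
    fix p :: "real \<times> real"
    obtain \<mu> \<sigma> where p: "p = (\<mu>, \<sigma>)" by fastforce
    have "\<sigma> > 0 \<Longrightarrow> (0 \<le> (\<mu>hat - \<mu>) / \<sigma> \<longleftrightarrow> \<mu> \<le> \<mu>hat)" by (simp add: zero_le_divide_iff)
    then show "p \<in> C4'' d (\<mu>hat, \<sigma>hat) \<longleftrightarrow> p \<in> {(\<mu>, \<sigma>) \<in> Theta. max (ufun d (\<sigma>hat / \<sigma>)) 0 \<le> (\<mu>hat - \<mu>) / \<sigma> \<and>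
                            (\<mu>hat - \<mu>) / \<sigma> \<le> ofun d (\<sigma>hat / \<sigma>)}"
      unfolding p C4''_def C4'_def Theta_def using KS_iff[of \<sigma> \<sigma>hat d \<mu> \<mu>hat] assms by auto
  qed
  show ?thesis using A B by blast
qed

end
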